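(* Let $k$ be a positive integer such that $k+1$ is an odd prime, and let $p>k^2+k$ be an odd prime. Let $(u_1,\ldots,u_k)\in\mathbb{Z}_{>0}^k$ satisfy $\gcd(u_1,\ldots,u_k)=1$ and $u_i\equiv i\pmod p$ for all $i=1,\ldots,k$. Then there is a real number $t$ with $\lVert t u_i\rVert\ge\frac1{k+1}$ for all $i=1,\ldots,k$.
   Context: For $x\in\mathbb{R}$, $\lVert x\rVert$ denotes the distance from $x$ to the nearest integer. *)

theory Defs
  imports Complex_Main "HOL-Number_Theory.Cong"
begin

definition dist_int :: "real \<Rightarrow> real" where
  "dist_int x = \<bar>x - of_int (round x)\<bar>"

end

theory Submission
  imports Defs "HOL-Number_Theory.Number_Theory" "HOL-Computational_Algebra.Polynomial"
begin

lemma powsum0: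
  fixes P n :: nat assumes P: "prime P" and n: "0 < n" "n < P - 1"
  shows "[(\<Sum>d<P. (int d)^n) = 0] (mod int P)"
proof -
  have P1: "P > 1" using P prime_gt_1_nat by blast
  obtain g where g: "residue_primroot P g" using prime_primitive_root_exists[of P] P P1 by auto
  have cop: "coprime P g" and ord: "ord P g = P - 1"
    using g P by (auto simp: residue_primroot_def totient_prime)
  have ne: "\<not> [g^n = 1] (mod P)" using ord_minimal[of n P g] n ord by simp
  have inj: "inj_on (\<lambda>d. g*d mod P) {..<P}"
  proof
    fix x y assume xy: "x \<in> {..<P}" "y \<in> {..<P}" "g*x mod P = g*y mod P"
    then have "[g*x = g*y] (mod P)" by (simp add: cong_def)
    then have "[x = y] (mod P)" using cop
      by (metis cong_mult_lcancel_nat coprime_commute)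
    then show "x = y" using xy by (simp add: cong_def)
  qed
  have bij: "bij_betw (\<lambda>d. g*d mod P) {..<P} {..<P}"
    by (rule bij_betw_imageI[OF inj]) (rule endo_inj_surj, auto simp: inj P1 intro!: mod_less_divisor)
  have "(\<Sum>d<P. d^n) = (\<Sum>d<P. (g*d mod P)^n)"
    using sum.reindex_bij_betw[OF bij, of "\<lambda>d. d^n"] by simp
  also have "[... = (\<Sum>d<P. (g*d)^n)] (mod P)"
    by (intro cong_sum cong_pow) (simp add: cong_def)
  also have "(\<Sum>d<P. (g*d)^n) = g^n * (\<Sum>d<P. d^n)"
    by (simp add: power_mult_distrib sum_distrib_left)
  finally have c: "[(\<Sum>d<P. d^n) = g^n * (\<Sum>d<P. d^n)] (mod P)" .
  define S where "S = (\<Sum>d<P. d^n)"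
  have c2: "[int (g^n * S) = int S] (mod int P)" using c unfolding S_def[symmetric]
    by (simp only: cong_int_iff cong_sym_eq)
  hence "int P dvd int (g^n*S) - int S" by (simp only: cong_iff_dvd_diff)
  moreover have "int (g^n*S) - int S = (int (g^n) - 1) * int S" by (simp add: algebra_simps)
  ultimately have d1: "int P dvd (int (g^n) - 1) * int S" by simp
  have "\<not> [int (g^n) = 1] (mod int P)" using ne cong_int_iff[of "g^n" 1 P] by auto
  hence d2: "\<not> int P dvd int (g^n) - 1" by (simp add: cong_iff_dvd_diff)
  have "prime (int P)" using P by simp
  hence "int P dvd int S" using d1 d2 by (simp add: prime_dvd_mult_iff)
  then show ?thesis unfolding S_def by (simp add: cong_0_iff)
qed

lemma powsum_top:
  fixes P :: nat assumes P: "prime P"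
  shows "[(\<Sum>d<P. (int d)^(P-1)) = -1] (mod int P)"
proof -
  have P1: "P > 1" using P prime_gt_1_nat by blast
  have "[(\<Sum>d<P. (int d)^(P-1)) = (\<Sum>d<P. if d = 0 then 0 else 1)] (mod int P)"
  proof (intro cong_sum)
    fix d assume d: "d \<in> {..<P}"
    show "[int d ^ (P - 1) = (if d = 0 then 0 else 1)] (mod int P)"
    proof (cases "d = 0")
      case True then show ?thesis using P1 by (simp add: power_0_left)
    next
      case False
      have "\<not> P dvd d" using False d by auto
      then have "[d ^ (P - 1) = 1] (mod P)" using fermat_theorem[OF P] by blast
      then have "[int (d ^ (P-1)) = int 1] (mod int P)" using cong_int_iff by blast
      then show ?thesis using False by simp
    qed
  qed
  also have "(\<Sum>d<P. if d = 0 then 0 else 1::int) = int P - 1"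
  proof -
    have "(\<Sum>d<P. if d = 0 then 0 else 1::int) = (\<Sum>d\<in>{..<P}-{0}. 1)"
      by (rule sum.mono_neutral_cong_right) auto
    also have "... = int P - 1" using P1 by simp
    finally show ?thesis .
  qed
  also have "[int P - 1 = -1] (mod int P)" by (simp add: cong_iff_dvd_diff)
  finally show ?thesis .
qed

lemma powsum_all:
  fixes P i :: nat assumes P: "prime P" and i: "i \<le> P - 1"
  shows "[(\<Sum>d<P. (int d)^i) = (if i = P - 1 then -1 else 0)] (mod int P)"
proof -
  consider "i = P - 1" | "i = 0" "i \<noteq> P - 1" | "0 < i" "i < P - 1" using i by linarith
  then show ?thesis
  proof cases
    case 1 then show ?thesis using powsum_top[OF P] by simp
  next
    case 2 then show ?thesis by (simp add: cong_0_iff)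
  next
    case 3 then show ?thesis using powsum0[OF P] by simp
  qed
qed

lemma poly_sum_bound:
  fixes f :: "int poly" assumes "degree f \<le> N"
  shows "poly f x = (\<Sum>i\<le>N. coeff f i * x^i)"
proof -
  have "poly f x = (\<Sum>i\<le>degree f. coeff f i * x^i)" by (rule poly_altdef)
  also have "... = (\<Sum>i\<le>N. coeff f i * x^i)"
    by (rule sum.mono_neutral_left) (use assms in \<open>auto simp: coeff_eq_0\<close>)
  finally show ?thesis .
qed

lemma polysum:
  fixes P :: nat and f :: "int poly" assumes P: "prime P" and deg: "degree f \<le> P - 1"
  shows "[(\<Sum>d<P. poly f (int d)) = - coeff f (P-1)] (mod int P)"
proof -
  have "(\<Sum>d<P. poly f (int d)) = (\<Sum>d<P. \<Sum>i\<le>P-1. coeff f i * (int d)^i)"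
    using poly_sum_bound[OF deg] by simp
  also have "... = (\<Sum>i\<le>P-1. coeff f i * (\<Sum>d<P. (int d)^i))"
    by (subst sum.swap) (simp add: sum_distrib_left)
  also have "[... = (\<Sum>i\<le>P-1. coeff f i * (if i = P - 1 then -1 else 0))] (mod int P)"
    by (rule cong_sum, rule cong_mult[OF cong_refl powsum_all[OF P]]) auto
  also have "(\<Sum>i\<le>P-1. coeff f i * (if i = P - 1 then -1 else 0)) =
     (\<Sum>i\<le>P-1. (if i = P - 1 then - coeff f i else 0))" by (intro sum.cong) auto
  also have "... = - coeff f (P-1)" by (subst sum.delta) auto
  finally show ?thesis .
qed

lemma comb:
  fixes P :: nat and w :: "nat \<Rightarrow> int"
  assumes P: "prime P"
    and A: "\<exists>i\<in>{1..P-1}. int P dvd w i" and B: "\<exists>j\<in>{1..P-1}. \<not> int P dvd w j"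
  shows "\<exists>X D :: int. \<forall>i\<in>{1..P-1}. (X * w i + D * int i) mod int P \<notin> {0, int P - 1}"
proof (rule ccontr)
  assume H: "\<not> ?thesis"
  define I where "I = {1..P-1}"
  define Pi where "Pi = int P"
  have H': "\<exists>i\<in>I. (X * w i + D * int i) mod Pi \<in> {0, Pi - 1}" for X D
  proof (rule ccontr)
    assume "\<not> (\<exists>i\<in>I. (X * w i + D * int i) mod Pi \<in> {0, Pi - 1})"
    then have "\<forall>i\<in>{1..P-1}. (X * w i + D * int i) mod int P \<notin> {0, int P - 1}"
      unfolding I_def Pi_def by auto
    then show False using H by blast
  qed
  define J where "J = {1..Pi-1}"
  have P1: "P > 1" using P prime_gt_1_nat by blast
  have Pip: "prime Pi" using P unfolding Pi_def by simp
  have Pi1: "Pi > 1" using P1 unfolding Pi_def by simp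
  define h where "h d i = (w i + int d * int i) mod Pi" for d i
  define R where "R = {d \<in> {..<P}. \<exists>i\<in>I. h d i = 0}"
  define Q where "Q = (\<Prod>i\<in>I. int i)"
  have JI: "J = int ` I"
  proof
    show "int ` I \<subseteq> J" unfolding J_def I_def Pi_def by auto
    show "J \<subseteq> int ` I"
    proof
      fix x assume "x \<in> J"
      then have "nat x \<in> I" "x = int (nat x)" unfolding J_def I_def Pi_def by auto
      then show "x \<in> int ` I" by blast
    qed
  qed
  have cardJ: "card J = card I" unfolding JI by (rule card_image) simp
  have hJ: "h d i \<in> J" if "h d i \<noteq> 0" for d i
  proof -
    have "0 \<le> (w i + int d * int i) mod Pi" "(w i + int d * int i) mod Pi < Pi" using Pi1 by simp_all
    then show ?thesis using that unfolding J_def h_def by auto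
  qed
  have good: "[(\<Prod>i\<in>I. w i + int d * int i) = Q] (mod Pi)" if d: "d \<in> {..<P} - R" for d
  proof -
    have nz: "h d i \<noteq> 0" if "i \<in> I" for i using d that unfolding R_def by auto
    have sub: "h d ` I \<subseteq> J" using hJ nz by auto
    have inj: "inj_on (h d) I"
    proof (rule ccontr)
      assume ni: "\<not> inj_on (h d) I"
      have "card (h d ` I) < card I"
        using ni inj_on_iff_eq_card[of I "h d"] card_image_le[of I "h d"] unfolding I_def by auto
      then have "h d ` I \<noteq> J" using cardJ by auto
      then obtain v where v: "v \<in> J" "v \<notin> h d ` I" using sub by auto
      have "coprime v Pi"
      proof -
        have "\<not> Pi dvd v" using v(1) unfolding J_def by (auto dest: zdvd_imp_le dvd_imp_le)
        then have "coprime Pi v" using Pip prime_imp_coprime by blast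
        then show ?thesis by (simp add: coprime_commute)
      qed
      then obtain X0 where X0: "[v * X0 = 1] (mod Pi)" using cong_solve_coprime_int by blast
      define X where "X = - X0"
      from H'[of X "X * int d"] obtain i where i: "i \<in> I"
        and c: "(X * w i + (X * int d) * int i) mod Pi \<in> {0, Pi - 1}" ..
      have e: "(X * w i + (X * int d) * int i) mod Pi = (X * h d i) mod Pi"
      proof -
        have "X * w i + (X * int d) * int i = X * (w i + int d * int i)" by (simp add: algebra_simps)
        then show ?thesis unfolding h_def mod_mult_right_eq by simp
      qed
      have hiJ: "h d i \<in> J" using sub i by auto
      have nX: "\<not> Pi dvd X"
      proof
        assume "Pi dvd X"
        then have "Pi dvd v * X0" unfolding X_def by simp
        then have "[v * X0 = 0] (mod Pi)" by (simp add: cong_0_iff)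
        then have "[0 = 1] (mod Pi)" using cong_trans[OF cong_sym X0] by blast
        then have "Pi dvd 1" by (simp add: cong_iff_dvd_diff)
        then show False using Pi1 by simp
      qed
      have nh: "\<not> Pi dvd h d i" using hiJ unfolding J_def by (auto dest: zdvd_imp_le dvd_imp_le)
      show False
      proof (cases "(X * h d i) mod Pi = 0")
        case True
        then have "Pi dvd X * h d i" by auto
        then show False using nX nh Pip by (simp add: prime_dvd_mult_iff)
      next
        case False
        then have "(X * h d i) mod Pi = Pi - 1" using c e by auto
        then have c1: "[X * h d i = -1] (mod Pi)" using Pi1
          by (simp add: cong_def zmod_minus1)
        have c2: "[X * v = -1] (mod Pi)" using cong_minus_minus_iff[THEN iffD2, OF X0] unfolding X_def
          by (simp add: mult.commute)
        have "[X * h d i = X * v] (mod Pi)" using cong_trans[OF c1 cong_sym[OF c2]] .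
        then have "Pi dvd X * (h d i - v)" by (simp add: cong_iff_dvd_diff right_diff_distrib)
        then have "Pi dvd h d i - v" using nX Pip by (simp add: prime_dvd_mult_iff)
        moreover have "\<bar>h d i - v\<bar> < Pi" using hiJ v(1) unfolding J_def by auto
        ultimately have "h d i - v = 0"
          using dvd_imp_le_int[of "h d i - v" Pi] Pi1 by linarith
        then have "h d i = v" by simp
        then show False using v(2) i by auto
      qed
    qed
    have bij: "bij_betw (h d) I J"
    proof -
      have "card (h d ` I) = card J" using inj cardJ by (simp add: card_image)
      then have "h d ` I = J" using sub card_subset_eq[of J "h d ` I"] unfolding J_def by auto
      then show ?thesis using inj by (simp add: bij_betw_def)
    qed
    have "[(\<Prod>i\<in>I. w i + int d * int i) = (\<Prod>i\<in>I. h d i)] (mod Pi)"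
      unfolding h_def by (intro cong_prod) (simp add: cong_def)
    also have "(\<Prod>i\<in>I. h d i) = (\<Prod>j\<in>J. j)" by (rule prod.reindex_bij_betw[OF bij])
    also have "... = Q" unfolding JI Q_def by (subst prod.reindex) auto
    finally show ?thesis .
  qed
  have bad: "[(\<Prod>i\<in>I. w i + int d * int i) = 0] (mod Pi)" if d: "d \<in> R" for d
  proof -
    obtain i where i: "i \<in> I" "h d i = 0" using d unfolding R_def by auto
    have "[(\<Prod>i\<in>I. w i + int d * int i) = (\<Prod>i\<in>I. h d i)] (mod Pi)"
      unfolding h_def by (intro cong_prod) (simp add: cong_def)
    also have "(\<Prod>i\<in>I. h d i) = 0" using i unfolding I_def by (auto intro!: prod_zero)
    finally show ?thesis .
  qed
  define F where "F = (\<Prod>i\<in>I. [:w i, int i:])"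
  have polyF: "poly F (int d) = (\<Prod>i\<in>I. w i + int d * int i)" for d
    unfolding F_def by (simp add: poly_prod)
  have nz: "[:w i, int i:] \<noteq> 0" if "i \<in> I" for i using that unfolding I_def by auto
  have degF: "degree F = P - 1"
  proof -
    have "degree F = (\<Sum>i\<in>I. degree [:w i, int i:])"
      unfolding F_def by (rule degree_prod_eq_sum_degree) (use nz in blast)
    also have "... = (\<Sum>i\<in>I. 1)" by (rule sum.cong) (auto simp: I_def)
    also have "... = P - 1" unfolding I_def by simp
    finally show ?thesis .
  qed
  have lcF: "coeff F (P - 1) = Q"
  proof -
    have "coeff F (P - 1) = lead_coeff F" using degF by simp
    also have "... = (\<Prod>i\<in>I. lead_coeff [:w i, int i:])" unfolding F_def by (rule lead_coeff_prod)
    also have "... = Q" unfolding Q_def by (rule prod.cong) (auto simp: I_def)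
    finally show ?thesis .
  qed
  have S1: "[(\<Sum>d<P. poly F (int d)) = - Q] (mod Pi)"
    using polysum[OF P, of F] degF lcF unfolding Pi_def by simp
  have S2: "[(\<Sum>d<P. poly F (int d)) = (\<Sum>d<P. if d \<in> R then 0 else Q)] (mod Pi)"
  proof (rule cong_sum)
    fix d assume d: "d \<in> {..<P}"
    show "[poly F (int d) = (if d \<in> R then 0 else Q)] (mod Pi)"
      using good[of d] bad[of d] d unfolding polyF by auto
  qed
  have RP: "R \<subseteq> {..<P}" unfolding R_def by auto
  have "(\<Sum>d<P. if d \<in> R then 0 else Q) = (\<Sum>d\<in>{..<P} - R. Q)"
    by (rule sum.mono_neutral_cong_right) auto
  also have "... = int (P - card R) * Q"
    using RP by (simp add: card_Diff_subset finite_subset)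
  finally have S3: "[int (P - card R) * Q = - Q] (mod Pi)"
    using S1 S2 by (metis cong_sym cong_trans)
  then have "Pi dvd (int (P - card R) + 1) * Q"
    by (simp add: cong_iff_dvd_diff algebra_simps)
  moreover have "\<not> Pi dvd Q"
  proof
    assume "Pi dvd Q"
    then obtain i where "i \<in> I" "Pi dvd int i"
      using Pip unfolding Q_def by (auto simp: prime_dvd_prod_iff I_def)
    then show False unfolding I_def Pi_def by (auto dest: zdvd_imp_le dvd_imp_le)
  qed
  ultimately have dv: "Pi dvd int (P - card R) + 1" using Pip by (simp add: prime_dvd_mult_iff)
  have R0: "0 \<in> R"
  proof -
    obtain i where i: "i \<in> I" "Pi dvd w i" using A unfolding I_def Pi_def by blast
    then have "h 0 i = 0" unfolding h_def by simp
    then show ?thesis using i P1 unfolding R_def by auto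
  qed
  obtain j where j: "j \<in> I" "\<not> Pi dvd w j" using B unfolding I_def Pi_def by blast
  have "\<not> Pi dvd int j" using j(1) unfolding I_def Pi_def by (auto dest: zdvd_imp_le dvd_imp_le)
  then have "coprime Pi (int j)" using Pip prime_imp_coprime by blast
  then obtain y where y: "[int j * y = 1] (mod Pi)"
    using cong_solve_coprime_int by (metis coprime_commute)
  define d0 where "d0 = nat ((- w j * y) mod Pi)"
  have d0i: "int d0 = (- w j * y) mod Pi" unfolding d0_def using Pi1 by simp
  have d0P: "d0 < P" using Pi1 unfolding d0_def Pi_def by (simp add: nat_less_iff)
  have "h d0 j = 0"
  proof -
    have "[w j + int d0 * int j = w j + (- w j * y) * int j] (mod Pi)"
      unfolding d0i by (intro cong_add cong_mult cong_refl) (simp add: cong_def)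
    moreover have "Pi dvd w j + (- w j * y) * int j"
    proof -
      have "Pi dvd int j * y - 1" using y by (simp add: cong_iff_dvd_diff)
      then have "Pi dvd w j * (1 - int j * y)" by (metis dvd_mult dvd_minus_iff minus_diff_eq)
      moreover have "w j * (1 - int j * y) = w j + (- w j * y) * int j" by (simp add: algebra_simps)
      ultimately show ?thesis by simp
    qed
    ultimately show ?thesis unfolding h_def
      by (metis cong_0_iff cong_def mod_0)
  qed
  then have d0R: "d0 \<in> R" using d0P j(1) unfolding R_def by auto
  have "d0 \<noteq> 0"
  proof
    assume "d0 = 0"
    then have "w j mod Pi = 0" using \<open>h d0 j = 0\<close> unfolding h_def by simp
    then show False using j(2) by auto
  qed
  then have "{0, d0} \<subseteq> R" "card {0, d0} = 2" using R0 d0R by auto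
  then have "card R \<ge> 2" using RP by (metis card_mono finite_lessThan finite_subset)
  moreover have "card R \<le> P" using RP card_mono[of "{..<P}" R] by simp
  ultimately have "0 < int (P - card R) + 1" "int (P - card R) + 1 < Pi"
    unfolding Pi_def by auto
  then show False using dv zdvd_imp_le by fastforce
qed


lemma dist_ge:
  assumes "\<And>m::int. \<bar>y - of_int m\<bar> \<ge> e" shows "dist_int y \<ge> e"
  using assms[of "round y"] unfolding dist_int_def by simp

lemma absN:
  fixes G e pp :: int assumes pp: "pp > 0" and e: "0 < e" "e < pp" and G: "G \<noteq> 0" "G \<noteq> -1"
  shows "\<bar>pp * G + e\<bar> \<ge> pp"
proof (cases "G \<ge> 1")
  case True
  then have "pp * G \<ge> pp * 1" by (intro mult_left_mono) (use pp in auto)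
  then have "pp * G \<ge> pp" by simp
  then show ?thesis using e by linarith
next
  case False
  then have "G \<le> -2" using G by auto
  then have "pp * G \<le> pp * (-2)" by (intro mult_left_mono) (use pp in auto)
  then have "pp * G \<le> - 2 * pp" by simp
  then show ?thesis using e by linarith
qed

lemma real_bound:
  fixes N :: int and pp PP :: real assumes "pp > 0" "PP > 0" "\<bar>real_of_int N\<bar> \<ge> pp"
  shows "\<bar>real_of_int N / (pp * PP)\<bar> \<ge> 1 / PP"
proof -
  have pos: "pp * PP > 0" using assms(1,2) by (rule mult_pos_pos)
  have "\<bar>real_of_int N / (pp * PP)\<bar> = \<bar>real_of_int N\<bar> / (pp * PP)"
    using pos by (simp only: abs_divide abs_of_pos)
  also have "... \<ge> pp / (pp * PP)" using assms(3) pos by (intro divide_right_mono) auto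
  also have "pp / (pp * PP) = 1 / PP" using assms(1) by (simp add: divide_simps)
  finally show ?thesis .
qed

theorem proposition1p2:
  fixes k p :: nat and u :: "nat \<Rightarrow> int"
  assumes "k > 0"
    and "prime (k + 1)" and "odd (k + 1)"
    and "prime p" and "odd p" and "p > k^2 + k"
    and "\<forall>i\<in>{1..k}. u i > 0"
    and "Gcd (u ` {1..k}) = 1"
    and "\<forall>i\<in>{1..k}. [u i = int i] (mod int p)"
  shows "\<exists>t::real. \<forall>i\<in>{1..k}. dist_int (t * of_int (u i)) \<ge> 1 / (real k + 1)"
proof -
  define P where "P = k + 1"
  have Pk: "P - 1 = k" unfolding P_def by simp
  have Pr: "prime P" using assms(2) unfolding P_def .
  have P1: "P > 1" unfolding P_def using assms(1) by simp
  have rP: "real P = real k + 1" unfolding P_def by simp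
  have "k * k + k < p" using assms(6) by (simp add: power2_eq_square)
  then have "int (k * k + k) < int p" by linarith
  moreover have "int P * int k = int (k * k + k)" unfolding P_def by (simp add: algebra_simps)
  ultimately have pbig: "int p > int P * int k" by simp
  have pp: "p > 0" using assms(4) prime_gt_0_nat by blast
  show ?thesis
  proof (cases "\<forall>i\<in>{1..k}. \<not> int P dvd u i")
    case True
    show ?thesis
    proof (intro exI[of _ "1 / real P"] ballI)
      fix i assume i: "i \<in> {1..k}"
      show "dist_int (1 / real P * of_int (u i)) \<ge> 1 / (real k + 1)"
      proof (rule dist_ge)
        fix m :: int
        have "u i - m * int P \<noteq> 0"
        proof
          assume "u i - m * int P = 0"
          then have "int P dvd u i" by (metis dvd_triv_right eq_iff_diff_eq_0)
          then show False using True i by blast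
        qed
        then have "\<bar>real_of_int (u i - m * int P)\<bar> \<ge> real 1" by linarith
        then have "\<bar>real_of_int (u i - m * int P) / (1 * real P)\<bar> \<ge> 1 / real P"
          by (intro real_bound) (use P1 in auto)
        moreover have "real_of_int (u i - m * int P) / (1 * real P) = 1 / real P * of_int (u i) - of_int m"
          using P1 by (simp add: field_simps)
        ultimately show "\<bar>1 / real P * of_int (u i) - of_int m\<bar> \<ge> 1 / (real k + 1)"
          using rP by simp
      qed
    qed
  next
    case False
    then have A: "\<exists>i\<in>{1..P-1}. int P dvd u i" using Pk by auto
    have B: "\<exists>j\<in>{1..P-1}. \<not> int P dvd u j"
    proof (rule ccontr)
      assume "\<not> ?thesis"
      then have "\<forall>b\<in>u ` {1..k}. int P dvd b" using Pk by auto
      then have "int P dvd Gcd (u ` {1..k})" by (intro Gcd_greatest) blast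
      then show False using assms(8) P1 by simp
    qed
    obtain X D where XD: "\<forall>i\<in>{1..P-1}. (X * u i + D * int i) mod int P \<notin> {0, int P - 1}"
      using comb[OF Pr A B] by blast
    define a where "a = - D * int p - 1"
    define c where "c = a mod int P + 1"
    have "0 \<le> a mod int P" "a mod int P < int P" using P1 by simp_all
    then have c1: "1 \<le> c" "c \<le> int P" unfolding c_def by auto
    have cc: "int P dvd c + D * int p"
    proof -
      have "c + D * int p = - (int P * (a div int P))"
        unfolding c_def a_def by (simp add: minus_div_mult_eq_mod [symmetric] algebra_simps)
      then show ?thesis by simp
    qed
    define x where "x = X + D"
    define t where "t = real_of_int (x * int p + c) / (real p * real P)"
    show ?thesis
    proof (intro exI[of _ t] ballI)
      fix i assume i: "i \<in> {1..k}"
      have "int p dvd u i - int i" using assms(9) i by (simp add: cong_iff_dvd_diff)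
      then obtain mi where mi: "u i - int i = int p * mi" by (elim dvdE)
      have ui: "u i = int i + int p * mi" using mi by simp
      show "dist_int (t * of_int (u i)) \<ge> 1 / (real k + 1)"
      proof (rule dist_ge)
        fix m :: int
        define G where "G = x * u i + c * mi - m * int P"
        have NG: "(x * int p + c) * u i - m * int p * int P = int p * G + c * int i"
          unfolding G_def ui by (simp add: algebra_simps)
        have "G - (X * u i + D * int i) = (c + D * int p) * mi - m * int P"
          unfolding G_def x_def ui by (simp add: algebra_simps)
        then have "int P dvd G - (X * u i + D * int i)" using cc by simp
        then have Gm: "G mod int P = (X * u i + D * int i) mod int P" by (simp add: mod_eq_dvd_iff)
        have "i \<in> {1..P-1}" using i Pk by simp
        then have Gn: "G mod int P \<notin> {0, int P - 1}" using XD Gm by simp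
        have G0: "G \<noteq> 0" using Gn by auto
        have G1: "G \<noteq> -1" using Gn P1 zmod_minus1[of "int P"] by auto
        have e1: "0 < c * int i" using c1 i by simp
        have "c * int i \<le> int P * int k" using c1 i by (intro mult_mono) auto
        then have e2: "c * int i < int p" using pbig by simp
        have N: "\<bar>int p * G + c * int i\<bar> \<ge> int p" by (rule absN) (use pp e1 e2 G0 G1 in auto)
        have "t * of_int (u i) - of_int m = real_of_int (int p * G + c * int i) / (real p * real P)"
        proof -
          have "t * of_int (u i) - of_int m = real_of_int ((x * int p + c) * u i - m * int p * int P) / (real p * real P)"
            unfolding t_def using pp P1 by (simp add: field_simps)
          then show ?thesis unfolding NG .
        qed
        moreover have "\<bar>real_of_int (int p * G + c * int i)\<bar> \<ge> real p"
          using N by linarith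
        ultimately show "\<bar>t * of_int (u i) - of_int m\<bar> \<ge> 1 / (real k + 1)"
          using real_bound[of "real p" "real P" "int p * G + c * int i"] pp P1 rP by simp
      qed
    qed
  qed
qed

end
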